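(* Let $p$ be a prime, let $(\mathcal G,\Gamma)$ be a finite proper reduced tree of pro-$p$ groups, $G=\Pi_1(\mathcal G,\Gamma)$, and let $V$ be a minimal (with respect to inclusion) subset of $V(\Gamma)$ such that $G=\langle\mathcal G(v)\mid v\in V\rangle$. Then $V$ contains all pending vertices of $\Gamma$ and $|V|\leq d(G)$.
   Context: A finite tree of pro-$p$ groups $(\mathcal G,\Gamma)$: a finite tree $\Gamma$, pro-$p$ groups $\mathcal G(v),\mathcal G(e)$ and monomorphisms $\partial_i:\mathcal G(e)\to\mathcal G(d_i(e))$ into the endpoint groups; its fundamental pro-$p$ group is generated by the vertex groups with the identifications $\partial_0(g)=\partial_1(g)$. Proper: vertex groups embed in $\Pi_1$. Reduced: for every edge, neither $\partial_0$ nor $\partial_1$ is an isomorphism. A pending vertex is a vertex with exactly one incident edge. $d(G)$ is the minimal number of topological generators; generation is topological. *)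

theory Defs
  imports "HOL-Analysis.Analysis" "HOL-Algebra.Generated_Groups" "HOL-Algebra.Coset" "HOL-Library.Extended_Nat"
begin

definition topgroup :: "('a, 'b) monoid_scheme \<Rightarrow> 'a topology \<Rightarrow> bool" where
  "topgroup G T \<longleftrightarrow> group G \<and> topspace T = carrier G \<and>
     continuous_map (prod_topology T T) T (\<lambda>(x, y). x \<otimes>\<^bsub>G\<^esub> y) \<and>
     continuous_map T T (\<lambda>x. inv\<^bsub>G\<^esub> x)"

definition profinite_group :: "('a, 'b) monoid_scheme \<Rightarrow> 'a topology \<Rightarrow> bool" where
  "profinite_group G T \<longleftrightarrow> topgroup G T \<and> compact_space T \<and> Hausdorff_space T \<and>
     (\<forall>x \<in> topspace T. connected_component_of_set T x = {x})"

definition pro_p_group :: "nat \<Rightarrow> ('a, 'b) monoid_scheme \<Rightarrow> 'a topology \<Rightarrow> bool" where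
  "pro_p_group p G T \<longleftrightarrow> Factorial_Ring.prime p \<and> profinite_group G T \<and>
     (\<forall>N. normal N G \<and> openin T N \<longrightarrow> (\<exists>k. card (rcosets\<^bsub>G\<^esub> N) = p ^ k))"

definition cont_hom ::
  "('a, 'b) monoid_scheme \<Rightarrow> 'a topology \<Rightarrow> ('c, 'd) monoid_scheme \<Rightarrow> 'c topology \<Rightarrow> ('a \<Rightarrow> 'c) \<Rightarrow> bool" where
  "cont_hom G T H S f \<longleftrightarrow> f \<in> hom G H \<and> continuous_map T S f"

definition cont_mono ::
  "('a, 'b) monoid_scheme \<Rightarrow> 'a topology \<Rightarrow> ('c, 'd) monoid_scheme \<Rightarrow> 'c topology \<Rightarrow> ('a \<Rightarrow> 'c) \<Rightarrow> bool" where
  "cont_mono G T H S f \<longleftrightarrow> cont_hom G T H S f \<and> inj_on f (carrier G)"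

definition finite_p_group :: "nat \<Rightarrow> ('a, 'b) monoid_scheme \<Rightarrow> bool" where
  "finite_p_group p H \<longleftrightarrow> group H \<and> finite (carrier H) \<and> (\<exists>k. card (carrier H) = p ^ k)"

text \<open>Topological generation and the minimal number of topological generators d(G)
  (as an extended natural; \<infinity> if G is not finitely generated).\<close>
definition top_generates :: "('a, 'b) monoid_scheme \<Rightarrow> 'a topology \<Rightarrow> 'a set \<Rightarrow> bool" where
  "top_generates G T Y \<longleftrightarrow> Y \<subseteq> carrier G \<and> T closure_of (generate G Y) = carrier G"

definition dgen :: "('a, 'b) monoid_scheme \<Rightarrow> 'a topology \<Rightarrow> enat" where
  "dgen G T = Inf {enat (card Y) | Y. finite Y \<and> top_generates G T Y}"

text \<open>A graph with vertex set Vs, edge set Es, and endpoint maps d0 d1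
  (each edge e joins d0 e and d1 e).\<close>

definition connected_graph :: "'v set \<Rightarrow> 'e set \<Rightarrow> ('e \<Rightarrow> 'v) \<Rightarrow> ('e \<Rightarrow> 'v) \<Rightarrow> bool" where
  "connected_graph Vs Es d0 d1 \<longleftrightarrow>
     (\<forall>u \<in> Vs. \<forall>w \<in> Vs. (u, w) \<in> ({(d0 e, d1 e) | e. e \<in> Es} \<union> {(d1 e, d0 e) | e. e \<in> Es})\<^sup>*)"

text \<open>A circuit: a nonempty list of pairwise distinct edges es and vertices vs
  with |vs| = |es| + 1, closed (first = last vertex), edge i joins vs!i and vs!(i+1),
  and the vertices vs!0 .. vs!(n-1) pairwise distinct.  (Loops and multiple edges are circuits.)\<close>
definition has_circuit :: "'v set \<Rightarrow> 'e set \<Rightarrow> ('e \<Rightarrow> 'v) \<Rightarrow> ('e \<Rightarrow> 'v) \<Rightarrow> bool" where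
  "has_circuit Vs Es d0 d1 \<longleftrightarrow>
     (\<exists>es vs. es \<noteq> [] \<and> distinct es \<and> set es \<subseteq> Es \<and> length vs = Suc (length es) \<and>
        hd vs = last vs \<and> distinct (butlast vs) \<and>
        (\<forall>i < length es. (d0 (es ! i) = vs ! i \<and> d1 (es ! i) = vs ! Suc i) \<or>
                         (d1 (es ! i) = vs ! i \<and> d0 (es ! i) = vs ! Suc i)))"

definition finite_tree :: "'v set \<Rightarrow> 'e set \<Rightarrow> ('e \<Rightarrow> 'v) \<Rightarrow> ('e \<Rightarrow> 'v) \<Rightarrow> bool" where
  "finite_tree Vs Es d0 d1 \<longleftrightarrow> finite Vs \<and> finite Es \<and> Vs \<noteq> {} \<and>
     (\<forall>e \<in> Es. d0 e \<in> Vs \<and> d1 e \<in> Vs) \<and>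
     connected_graph Vs Es d0 d1 \<and> \<not> has_circuit Vs Es d0 d1"

definition pending_vertex :: "'v set \<Rightarrow> 'e set \<Rightarrow> ('e \<Rightarrow> 'v) \<Rightarrow> ('e \<Rightarrow> 'v) \<Rightarrow> 'v \<Rightarrow> bool" where
  "pending_vertex Vs Es d0 d1 v \<longleftrightarrow> v \<in> Vs \<and> card {e \<in> Es. d0 e = v \<or> d1 e = v} = 1"

definition tree_of_pro_p_groups ::
  "nat \<Rightarrow> 'v set \<Rightarrow> 'e set \<Rightarrow> ('e \<Rightarrow> 'v) \<Rightarrow> ('e \<Rightarrow> 'v) \<Rightarrow>
   ('v \<Rightarrow> ('a, 'b) monoid_scheme) \<Rightarrow> ('v \<Rightarrow> 'a topology) \<Rightarrow>
   ('e \<Rightarrow> ('a, 'b) monoid_scheme) \<Rightarrow> ('e \<Rightarrow> 'a topology) \<Rightarrow>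
   ('e \<Rightarrow> 'a \<Rightarrow> 'a) \<Rightarrow> ('e \<Rightarrow> 'a \<Rightarrow> 'a) \<Rightarrow> bool" where
  "tree_of_pro_p_groups p Vs Es d0 d1 VG VT EG ET b0 b1 \<longleftrightarrow>
     finite_tree Vs Es d0 d1 \<and>
     (\<forall>v \<in> Vs. pro_p_group p (VG v) (VT v)) \<and>
     (\<forall>e \<in> Es. pro_p_group p (EG e) (ET e) \<and>
        cont_mono (EG e) (ET e) (VG (d0 e)) (VT (d0 e)) (b0 e) \<and>
        cont_mono (EG e) (ET e) (VG (d1 e)) (VT (d1 e)) (b1 e))"

text \<open>Reduced: no edge map is an isomorphism (the edge maps being monomorphisms,
  this means neither is surjective).\<close>
definition reduced_tree ::
  "'e set \<Rightarrow> ('e \<Rightarrow> 'v) \<Rightarrow> ('e \<Rightarrow> 'v) \<Rightarrow> ('v \<Rightarrow> ('a, 'b) monoid_scheme) \<Rightarrow>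
   ('e \<Rightarrow> ('a, 'b) monoid_scheme) \<Rightarrow> ('e \<Rightarrow> 'a \<Rightarrow> 'a) \<Rightarrow> ('e \<Rightarrow> 'a \<Rightarrow> 'a) \<Rightarrow> bool" where
  "reduced_tree Es d0 d1 VG EG b0 b1 \<longleftrightarrow>
     (\<forall>e \<in> Es. b0 e ` carrier (EG e) \<noteq> carrier (VG (d0 e)) \<and>
               b1 e ` carrier (EG e) \<noteq> carrier (VG (d1 e)))"

definition compatible_family ::
  "'v set \<Rightarrow> 'e set \<Rightarrow> ('e \<Rightarrow> 'v) \<Rightarrow> ('e \<Rightarrow> 'v) \<Rightarrow>
   ('v \<Rightarrow> ('a, 'b) monoid_scheme) \<Rightarrow> ('v \<Rightarrow> 'a topology) \<Rightarrow>
   ('e \<Rightarrow> ('a, 'b) monoid_scheme) \<Rightarrow> ('e \<Rightarrow> 'a \<Rightarrow> 'a) \<Rightarrow> ('e \<Rightarrow> 'a \<Rightarrow> 'a) \<Rightarrow>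
   ('c, 'd) monoid_scheme \<Rightarrow> 'c topology \<Rightarrow> ('v \<Rightarrow> 'a \<Rightarrow> 'c) \<Rightarrow> bool" where
  "compatible_family Vs Es d0 d1 VG VT EG b0 b1 H S f \<longleftrightarrow>
     (\<forall>v \<in> Vs. cont_hom (VG v) (VT v) H S (f v)) \<and>
     (\<forall>e \<in> Es. \<forall>g \<in> carrier (EG e). f (d0 e) (b0 e g) = f (d1 e) (b1 e g))"

text \<open>Since every pro-p group is the inverse limit of its finite continuous
  quotients, it suffices (and is equivalent) to test the universal property against finite
  p-groups with the discrete topology; every finite group is isomorphic to one with
  carrier in nat, so we take test groups of element type nat.\<close>
definition fundamental_pro_p_group ::
  "nat \<Rightarrow> 'v set \<Rightarrow> 'e set \<Rightarrow> ('e \<Rightarrow> 'v) \<Rightarrow> ('e \<Rightarrow> 'v) \<Rightarrow>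
   ('v \<Rightarrow> ('a, 'b) monoid_scheme) \<Rightarrow> ('v \<Rightarrow> 'a topology) \<Rightarrow>
   ('e \<Rightarrow> ('a, 'b) monoid_scheme) \<Rightarrow> ('e \<Rightarrow> 'a \<Rightarrow> 'a) \<Rightarrow> ('e \<Rightarrow> 'a \<Rightarrow> 'a) \<Rightarrow>
   ('g, 'h) monoid_scheme \<Rightarrow> 'g topology \<Rightarrow> ('v \<Rightarrow> 'a \<Rightarrow> 'g) \<Rightarrow> bool" where
  "fundamental_pro_p_group p Vs Es d0 d1 VG VT EG b0 b1 G T iota \<longleftrightarrow>
     pro_p_group p G T \<and>
     compatible_family Vs Es d0 d1 VG VT EG b0 b1 G T iota \<and>
     (\<forall>(H :: nat monoid) f. finite_p_group p H \<and>
        compatible_family Vs Es d0 d1 VG VT EG b0 b1 H (discrete_topology (carrier H)) f \<longrightarrow>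
        (\<exists>!phi. phi \<in> extensional (carrier G) \<and>
           cont_hom G T H (discrete_topology (carrier H)) phi \<and>
           (\<forall>v \<in> Vs. \<forall>x \<in> carrier (VG v). phi (iota v x) = f v x)))"

definition proper_tree ::
  "'v set \<Rightarrow> ('v \<Rightarrow> ('a, 'b) monoid_scheme) \<Rightarrow> ('v \<Rightarrow> 'a \<Rightarrow> 'g) \<Rightarrow> bool" where
  "proper_tree Vs VG iota \<longleftrightarrow> (\<forall>v \<in> Vs. inj_on (iota v) (carrier (VG v)))"

definition generated_by_vertices ::
  "('g, 'h) monoid_scheme \<Rightarrow> 'g topology \<Rightarrow> ('v \<Rightarrow> ('a, 'b) monoid_scheme) \<Rightarrow>
   ('v \<Rightarrow> 'a \<Rightarrow> 'g) \<Rightarrow> 'v set \<Rightarrow> bool" where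
  "generated_by_vertices G T VG iota V \<longleftrightarrow>
     top_generates G T (\<Union>v \<in> V. iota v ` carrier (VG v))"

end

theory Submission
  imports Defs "HOL-Algebra.Group_Action" "HOL-Algebra.Multiplicative_Group"
begin

definition Zp :: "nat \<Rightarrow> nat monoid" where
  "Zp p = \<lparr>carrier = {..<p}, mult = (\<lambda>x y. (x + y) mod p), one = 0\<rparr>"

lemma Zp_simps[simp]: "carrier (Zp p) = {..<p}" "x \<otimes>\<^bsub>Zp p\<^esub> y = (x + y) mod p" "\<one>\<^bsub>Zp p\<^esub> = 0"
  by (auto simp: Zp_def)

lemma group_Zp: assumes "0 < p" shows "group (Zp p)"
proof (rule groupI)
  fix x assume "x \<in> carrier (Zp p)"
  then show "\<exists>y\<in>carrier (Zp p). y \<otimes>\<^bsub>Zp p\<^esub> x = \<one>\<^bsub>Zp p\<^esub>"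
    by (intro bexI[of _ "(p - x) mod p"]) (auto simp: mod_add_left_eq assms)
qed (auto simp: assms mod_add_left_eq mod_add_right_eq add.assoc)

lemma finite_p_group_Zp: assumes "prime p" shows "finite_p_group p (Zp p)"
  unfolding finite_p_group_def using assms group_Zp[of p] prime_gt_0_nat
  by (auto intro: exI[of _ 1])

lemma dvd_prime_pow_ne1:
  fixes p d :: nat
  assumes "prime p" "d dvd p ^ n" "d \<noteq> 1"
  shows "p dvd d"
proof -
  obtain i where "d = p ^ i" using assms(1,2) divides_primepow_nat by blast
  with assms(3) have "i \<noteq> 0" by auto
  then show ?thesis using \<open>d = p ^ i\<close> by (simp add: dvd_power)
qed

lemma (in group_action) card_nonfixed_dvd:
  assumes fin: "finite (carrier G)" "finite E" and p: "prime p" and ord: "order G = p ^ n"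
  shows "p dvd card {x \<in> E. \<exists>g\<in>carrier G. \<phi> g x \<noteq> x}"
proof -
  define F where "F = {x \<in> E. \<exists>g\<in>carrier G. \<phi> g x \<noteq> x}"
  define f where "f x = (if x \<in> F then 1 else (0::nat))" for x
  have "card F = (\<Sum>x\<in>E. f x)"
    unfolding f_def by (rule card_as_sums) (auto simp: F_def fin)
  also have "\<dots> = (\<Sum>orb\<in>orbits G E \<phi>. \<Sum>x\<in>orb. f x)"
    using disjoint_sum[OF fin(2), of f] by simp
  also have "p dvd \<dots>"
  proof (rule dvd_sum)
    fix Ob assume "Ob \<in> orbits G E \<phi>"
    then obtain x0 where x0: "x0 \<in> E" "Ob = orbit G \<phi> x0" unfolding orbits_def by blast
    have fixed_orb: "orbit G \<phi> y = {y}" if "y \<in> E" "y \<notin> F" for y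
      using that orbit_refl[of y] unfolding orbit_def F_def by auto
    have OE: "Ob \<subseteq> E" using x0 unfolding orbit_def using element_image by blast
    show "p dvd (\<Sum>x\<in>Ob. f x)"
    proof (cases "x0 \<in> F")
      case False
      then show ?thesis using x0 fixed_orb[of x0] by (simp add: f_def)
    next
      case True
      have allF: "y \<in> F" if "y \<in> Ob" for y
      proof (rule ccontr)
        assume "y \<notin> F"
        have "x0 \<in> orbit G \<phi> y" using orbit_sym[of x0 y] x0 that OE by auto
        then have "x0 = y" using fixed_orb[of y] \<open>y \<notin> F\<close> that OE by auto
        with True \<open>y \<notin> F\<close> show False by simp
      qed
      then have "(\<Sum>x\<in>Ob. f x) = card Ob" by (simp add: f_def)
      moreover have "card Ob dvd p ^ n"
        using orbit_stabilizer_theorem[OF x0(1)] x0(2) ord by (metis dvd_triv_left)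
      moreover have "card Ob \<noteq> 1"
      proof
        assume "card Ob = 1"
        then obtain z where "Ob = {z}" by (meson card_1_singletonE)
        moreover have "x0 \<in> Ob" using x0 orbit_refl by auto
        moreover obtain g where "g \<in> carrier G" "\<phi> g x0 \<noteq> x0" using True by (auto simp: F_def)
        moreover have "\<phi> g x0 \<in> Ob" using x0 \<open>g \<in> carrier G\<close> unfolding orbit_def by auto
        ultimately show False by auto
      qed
      ultimately show ?thesis using dvd_prime_pow_ne1[OF p] by auto
    qed
  qed
  finally show ?thesis unfolding F_def .
qed

lemma (in group) finite_subgroupI:
  assumes fin: "finite (carrier G)" and sub: "H \<subseteq> carrier G" and ne: "H \<noteq> {}"
    and mult: "\<And>a b. a \<in> H \<Longrightarrow> b \<in> H \<Longrightarrow> a \<otimes> b \<in> H"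
  shows "subgroup H G"
proof (rule subgroupI[OF sub ne _ mult])
  fix a assume a: "a \<in> H"
  then have ac: "a \<in> carrier G" using sub by auto
  have pw: "a [^] Suc n \<in> H" for n
    by (induction n) (use a ac mult in \<open>auto simp: nat_pow_Suc\<close>)
  have o: "order G \<ge> 1" using fin ac unfolding order_def by (metis card_0_eq empty_iff less_one not_le)
  have "a [^] (2 * order G - 1) \<otimes> a = a [^] (2 * order G)"
    using ac o nat_pow_Suc[of a "2 * order G - 1"] by (simp add: Suc_diff_Suc)
  also have "\<dots> = \<one>" using ac by (simp add: nat_pow_pow[symmetric] pow_order_eq_1 mult.commute)
  finally have "inv a = a [^] (2 * order G - 1)" using ac by (intro inv_equality) auto
  also have "\<dots> \<in> H" using pw[of "2 * order G - 2"] o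
    by (metis Suc_diff_Suc diff_Suc_1 mult_2 add_diff_cancel_left' le_add1 less_le_trans Suc_le_eq nat_less_le numeral_2_eq_2 one_add_one)
  finally show "inv a \<in> H" .
qed

lemma (in group) p_group_maximal_normal:
  assumes fin: "finite (carrier G)" and p: "prime p" and ord: "order G = p ^ k"
    and M: "subgroup M G" "M \<noteq> carrier G"
    and maxM: "\<And>S. subgroup S G \<Longrightarrow> M \<subseteq> S \<Longrightarrow> S \<noteq> carrier G \<Longrightarrow> S = M"
  shows "M \<lhd> G"
proof -
  interpret MS: subgroup M G by (rule M(1))
  define MG where "MG = G\<lparr>carrier := M\<rparr>"
  have gMG: "group MG" unfolding MG_def by (rule subgroup_imp_group[OF M(1)])
  define E where "E = rcosets M"
  define \<phi> where "\<phi> m = (\<lambda>X\<in>E. X #> inv m)" for m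
  have Ecl: "X #> g \<in> E" if XE: "X \<in> E" and gc: "g \<in> carrier G" for X g
  proof -
    obtain a where a: "a \<in> carrier G" "X = M #> a" using XE unfolding E_def RCOSETS_def by auto
    then show ?thesis using gc coset_mult_assoc[of M a g] MS.subset
      unfolding E_def by (auto intro!: rcosetsI)
  qed
  have Esub: "X \<subseteq> carrier G" if "X \<in> E" for X
    using that MS.rcosets_carrier[OF is_group] unfolding E_def by auto
  have bij: "\<phi> m \<in> Bij E" if m: "m \<in> M" for m
  proof -
    have mc: "m \<in> carrier G" using m MS.subset by auto
    have "bij_betw (\<lambda>X. X #> inv m) E E"
    proof (rule bij_betw_byWitness[where f'="\<lambda>X. X #> m"])
      show "\<forall>X\<in>E. X #> inv m #> m = X" using mc Esub by (simp add: coset_mult_assoc)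
      show "\<forall>X\<in>E. X #> m #> inv m = X" using mc Esub by (simp add: coset_mult_assoc)
    qed (use mc Ecl in auto)
    then have "bij_betw (\<phi> m) E E" unfolding \<phi>_def by (rule bij_betw_cong[THEN iffD1, rotated]) auto
    then show ?thesis unfolding Bij_def \<phi>_def by auto
  qed
  have act: "group_action MG E \<phi>"
    unfolding group_action_def group_hom_def group_hom_axioms_def
  proof (intro conjI gMG group_BijGroup homI)
    fix m assume "m \<in> carrier MG"
    then show "\<phi> m \<in> carrier (BijGroup E)" using bij by (simp add: MG_def BijGroup_def)
  next
    fix a b assume ab: "a \<in> carrier MG" "b \<in> carrier MG"
    then have abM: "a \<in> M" "b \<in> M" by (auto simp: MG_def)
    then have abc: "a \<in> carrier G" "b \<in> carrier G" using MS.subset by auto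
    have "\<phi> a \<otimes>\<^bsub>BijGroup E\<^esub> \<phi> b = compose E (\<phi> a) (\<phi> b)"
      using bij abM by (simp add: BijGroup_def)
    also have "\<dots> = \<phi> (a \<otimes> b)"
      unfolding compose_def \<phi>_def
      using abc Ecl Esub by (auto intro!: ext simp: coset_mult_assoc inv_mult_group)
    finally show "\<phi> (a \<otimes>\<^bsub>MG\<^esub> b) = \<phi> a \<otimes>\<^bsub>BijGroup E\<^esub> \<phi> b" by (simp add: MG_def)
  qed
  interpret A: group_action MG E \<phi> by (rule act)
  have finE: "finite E" unfolding E_def using fin rcosets_subset_PowG[OF M(1)] by (meson finite_Pow_iff finite_subset)
  have finM: "finite M" using fin MS.subset finite_subset by auto
  have lag: "card E * card M = p ^ k" using lagrange[OF M(1)] ord unfolding E_def by simp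
  have "card M dvd p ^ k" using lag by (metis dvd_triv_right)
  then obtain i where ci: "card M = p ^ i" using divides_primepow_nat[OF p] by blast
  have ordMG: "order MG = p ^ i" unfolding order_def MG_def using ci by simp
  have finMG: "finite (carrier MG)" using finM by (simp add: MG_def)
  define NF where "NF = {x \<in> E. \<exists>g\<in>carrier MG. \<phi> g x \<noteq> x}"
  have dNF: "p dvd card NF" unfolding NF_def by (rule A.card_nonfixed_dvd[OF finMG finE p ordMG])
  obtain x where x: "x \<in> carrier G" "x \<notin> M" using M(2) MS.subset by auto
  have ME: "M \<in> E" unfolding E_def by (rule MS.subgroup_in_rcosets[OF is_group])
  have MxE: "M #> x \<in> E" unfolding E_def using x MS.subset by (auto intro: rcosetsI)
  have "M #> x \<noteq> M" using coset_join1[of M x] x M(1) by auto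
  then have "card {M, M #> x} = 2" by auto
  moreover have "{M, M #> x} \<subseteq> E" using ME MxE by auto
  ultimately have "card E \<ge> 2" using finE by (metis card_mono)
  then have "card E \<noteq> 1" by auto
  moreover have "card E dvd p ^ k" using lag by (metis dvd_triv_left)
  ultimately have dE: "p dvd card E" using dvd_prime_pow_ne1[OF p] by blast
  define Fx where "Fx = E - NF"
  have NFsub: "NF \<subseteq> E" unfolding NF_def by auto
  have cFx: "card Fx = card E - card NF" unfolding Fx_def using card_Diff_subset[OF finite_subset[OF NFsub finE] NFsub] .
  have dFx: "p dvd card Fx" unfolding cFx using dE dNF by (rule dvd_diff_nat)
  have MFx: "M \<in> Fx"
  proof -
    have "\<phi> g M = M" if "g \<in> carrier MG" for g
    proof -
      have "g \<in> M" using that by (simp add: MG_def)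
      then have "inv g \<in> M" by (rule MS.m_inv_closed)
      then show ?thesis using ME unfolding \<phi>_def by (simp add: MS.rcos_const[OF is_group])
    qed
    then show ?thesis unfolding Fx_def NF_def using ME by blast
  qed
  have finFx: "finite Fx" unfolding Fx_def using finE by auto
  have "card Fx \<noteq> 0" using MFx finFx by auto
  then have "card Fx \<ge> p" using dFx by (intro dvd_imp_le) auto
  then have "card Fx \<ge> 2" using prime_ge_2_nat[OF p] by linarith
  have "\<exists>X\<in>Fx. X \<noteq> M"
  proof (rule ccontr)
    assume "\<not> ?thesis"
    then have "Fx \<subseteq> {M}" by auto
    then have "card Fx \<le> 1" using card_mono[of "{M}" Fx] by simp
    with \<open>card Fx \<ge> 2\<close> show False by simp
  qed
  then obtain X where X: "X \<in> Fx" "X \<noteq> M" by blast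
  then obtain g where g: "g \<in> carrier G" "X = M #> g" unfolding Fx_def E_def RCOSETS_def by auto
  have gM: "g \<notin> M" using g X MS.rcos_const[OF is_group] by auto
  have conj_g: "g \<otimes> m \<otimes> inv g \<in> M" if m: "m \<in> M" for m
  proof -
    have imM: "inv m \<in> carrier MG" using m by (simp add: MG_def)
    have XE: "X \<in> E" using X unfolding Fx_def by auto
    have "\<phi> (inv m) X = X" using X(1) imM unfolding Fx_def NF_def by auto
    then have "X #> inv (inv m) = X" using XE unfolding \<phi>_def by simp
    then have "M #> (g \<otimes> m) = M #> g" using g m MS.subset by (auto simp: coset_mult_assoc)
    then have "g \<otimes> m \<in> M #> g" using g m MS.subset repr_independenceD[OF M(1)] by auto
    then show ?thesis using MS.rcos_module_imp[OF is_group g(1)] by blast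
  qed
  define Nz where "Nz = {y \<in> carrier G. \<forall>m\<in>M. y \<otimes> m \<otimes> inv y \<in> M}"
  have Nzsub: "subgroup Nz G"
  proof (rule finite_subgroupI[OF fin])
    show "Nz \<subseteq> carrier G" "Nz \<noteq> {}" unfolding Nz_def using MS.subset by auto
    fix a b assume ab: "a \<in> Nz" "b \<in> Nz"
    then have abc: "a \<in> carrier G" "b \<in> carrier G" unfolding Nz_def by auto
    have "a \<otimes> b \<otimes> m \<otimes> inv (a \<otimes> b) \<in> M" if "m \<in> M" for m
    proof -
      have "b \<otimes> m \<otimes> inv b \<in> M" using ab that unfolding Nz_def by auto
      then have "a \<otimes> (b \<otimes> m \<otimes> inv b) \<otimes> inv a \<in> M" using ab unfolding Nz_def by auto
      then show ?thesis using abc that MS.subset by (simp add: m_assoc inv_mult_group subset_iff)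
    qed
    then show "a \<otimes> b \<in> Nz" unfolding Nz_def using abc by auto
  qed
  have "M \<subseteq> Nz" unfolding Nz_def using MS.subset by auto
  moreover have "g \<in> Nz" unfolding Nz_def using g conj_g by auto
  ultimately have "Nz = carrier G" using maxM[OF Nzsub] gM by blast
  then have "\<forall>x\<in>carrier G. \<forall>h\<in>M. x \<otimes> h \<otimes> inv x \<in> M" unfolding Nz_def by blast
  then show ?thesis unfolding normal_inv_iff using M(1) by blast
qed

lemma (in group) subgroup_nat_pow_closed':
  assumes "subgroup M G" "m \<in> M" shows "m [^] (n::nat) \<in> M"
  using assms by (induction n) (auto simp: subgroup.one_closed subgroup.m_closed nat_pow_Suc)

lemma (in group) coset_absorb:
  assumes "subgroup M G" "m \<in> M" "z \<in> carrier G"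
  shows "M #> (m \<otimes> z) = M #> z"
proof -
  have "m \<in> carrier G" using assms subgroup.subset by blast
  then have "M #> (m \<otimes> z) = (M #> m) #> z" using assms subgroup.subset[OF assms(1)] coset_mult_assoc[of M m z] by simp
  also have "M #> m = M" using subgroup.rcos_const[OF assms(1) is_group assms(2)] .
  finally show ?thesis .
qed

lemma (in group) normal_pow_subgroup:
  assumes fin: "finite (carrier G)" and N: "M \<lhd> G" and y: "y \<in> carrier G"
  shows "subgroup {m \<otimes> y [^] (i::nat) | m i. m \<in> M} G"
    and "M \<subseteq> {m \<otimes> y [^] (i::nat) | m i. m \<in> M}"
    and "y \<in> {m \<otimes> y [^] (i::nat) | m i. m \<in> M}"
proof -
  interpret N: normal M G by (rule N)
  define S where "S = {m \<otimes> y [^] (i::nat) | m i. m \<in> M}"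
  show "M \<subseteq> {m \<otimes> y [^] (i::nat) | m i. m \<in> M}"
  proof
    fix m assume "m \<in> M"
    then have "m = m \<otimes> y [^] (0::nat)" using N.subset by auto
    then show "m \<in> {m \<otimes> y [^] (i::nat) | m i. m \<in> M}" using \<open>m \<in> M\<close> by blast
  qed
  show "y \<in> {m \<otimes> y [^] (i::nat) | m i. m \<in> M}"
    using y by (intro CollectI exI[of _ \<one>] exI[of _ "1::nat"]) (auto simp: N.one_closed)
  show "subgroup {m \<otimes> y [^] (i::nat) | m i. m \<in> M} G"
  proof (rule finite_subgroupI[OF fin])
    show "{m \<otimes> y [^] (i::nat) | m i. m \<in> M} \<subseteq> carrier G" using y N.subset by auto
    have "\<one> \<otimes> y [^] (0::nat) \<in> {m \<otimes> y [^] (i::nat) | m i. m \<in> M}" using N.one_closed by blast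
    then show "{m \<otimes> y [^] (i::nat) | m i. m \<in> M} \<noteq> {}" by blast
    fix a b assume a: "a \<in> {m \<otimes> y [^] (i::nat) | m i. m \<in> M}" and b: "b \<in> {m \<otimes> y [^] (i::nat) | m i. m \<in> M}"
    then obtain m1 i m2 j where ab: "a = m1 \<otimes> y [^] (i::nat)" "m1 \<in> M" "b = m2 \<otimes> y [^] (j::nat)" "m2 \<in> M" by blast
    have c: "m1 \<in> carrier G" "m2 \<in> carrier G" using ab N.subset by auto
    have conjM: "y [^] i \<otimes> m2 \<otimes> inv (y [^] i) \<in> M" using N.inv_op_closed2 ab y by auto
    have "a \<otimes> b = (m1 \<otimes> (y [^] i \<otimes> m2 \<otimes> inv (y [^] i))) \<otimes> y [^] (i + j)"
    proof -
      have e: "inv (y [^] i) \<otimes> (y [^] i \<otimes> y [^] j) = y [^] j" using y by (simp add: m_assoc[symmetric])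
      show ?thesis using ab c y e by (simp add: m_assoc nat_pow_mult[symmetric])
    qed
    moreover have "m1 \<otimes> (y [^] i \<otimes> m2 \<otimes> inv (y [^] i)) \<in> M" using conjM ab by (simp add: N.m_closed)
    ultimately show "a \<otimes> b \<in> {m \<otimes> y [^] (i::nat) | m i. m \<in> M}" by blast
  qed
qed

lemma (in group) max_normal_char:
  assumes fin: "finite (carrier G)" and p: "prime p" and ord: "order G = p ^ k"
    and N: "M \<lhd> G" and Mne: "M \<noteq> carrier G"
    and maxM: "\<And>S. subgroup S G \<Longrightarrow> M \<subseteq> S \<Longrightarrow> S \<noteq> carrier G \<Longrightarrow> S = M"
  shows "\<exists>\<psi>. \<psi> \<in> hom G (Zp p) \<and> (\<forall>m\<in>M. \<psi> m = 0) \<and> (\<exists>y\<in>carrier G. \<psi> y \<noteq> 0)"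
proof -
  interpret N: normal M G by (rule N)
  have sgM: "subgroup M G" by (rule N.subgroup_axioms)
  obtain x where x: "x \<in> carrier G" "x \<notin> M" using Mne N.subset by auto
  define r where "r = (LEAST n::nat. 0 < n \<and> x [^] n \<in> M)"
  have o: "0 < order G" using fin x unfolding order_def by (auto simp: card_gt_0_iff)
  have ex: "0 < order G \<and> x [^] order G \<in> M" using o x pow_order_eq_1 N.one_closed by simp
  have r: "0 < r" "x [^] r \<in> M" using LeastI[of "\<lambda>n::nat. 0 < n \<and> x [^] n \<in> M", OF ex] unfolding r_def by auto
  have rmin: "x [^] n \<notin> M" if "0 < n" "n < r" for n
    using not_less_Least[of n "\<lambda>n::nat. 0 < n \<and> x [^] n \<in> M"] that unfolding r_def by auto
  have Rmod: "M #> x [^] a = M #> x [^] (a mod r)" for a :: nat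
  proof -
    have "x [^] a = (x [^] r) [^] (a div r) \<otimes> x [^] (a mod r)"
      using x by (simp add: nat_pow_pow nat_pow_mult)
    moreover have "(x [^] r) [^] (a div r) \<in> M" using subgroup_nat_pow_closed'[OF sgM r(2)] .
    ultimately show ?thesis using coset_absorb[OF sgM] x by simp
  qed
  have Rinj: "i = j" if "i < r" "j < r" "M #> x [^] i = M #> x [^] j" for i j
  proof (rule ccontr)
    assume "i \<noteq> j"
    have key: False if "a < b" "b < r" "M #> x [^] a = M #> x [^] b" for a b
    proof -
      have "x [^] b \<in> M #> x [^] a" using that(3) repr_independenceD[OF sgM] x by auto
      then have "x [^] b \<otimes> inv (x [^] a) \<in> M" using N.rcos_module_imp[OF is_group] x by auto
      moreover have "x [^] b = x [^] (b - a) \<otimes> x [^] a" using x that(1) by (simp add: nat_pow_mult)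
      ultimately have "x [^] (b - a) \<in> M" using x by (simp add: m_assoc)
      then show False using rmin[of "b - a"] that by auto
    qed
    show False using key[of i j] key[of j i] that \<open>i \<noteq> j\<close> by (cases "i < j") auto
  qed
  define S where "S y = {m \<otimes> y [^] (i::nat) | m i. m \<in> M}" for y
  have Scar: "S x = carrier G"
  proof (rule ccontr)
    assume "S x \<noteq> carrier G"
    then have "S x = M" using maxM normal_pow_subgroup[OF fin N x(1)] unfolding S_def by blast
    then show False using normal_pow_subgroup(3)[OF fin N x(1)] x unfolding S_def by blast
  qed
  have cover: "\<exists>i<r. q \<in> M #> x [^] i" if q: "q \<in> carrier G" for q
  proof -
    obtain m a where ma: "q = m \<otimes> x [^] (a::nat)" "m \<in> M" using q Scar unfolding S_def by blast
    have "q \<in> M #> x [^] a" using ma x N.subset by (auto intro: rcosI)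
    then have "q \<in> M #> x [^] (a mod r)" using Rmod by simp
    then show ?thesis using r(1) by (intro exI[of _ "a mod r"]) auto
  qed
  have cardG: "card (carrier G) = r * card M"
  proof -
    have "carrier G = (\<Union>i\<in>{..<r}. M #> x [^] i)"
      using cover x N.subset by (auto intro: r_coset_subset_G[THEN subsetD])
    moreover have "card (\<Union>i\<in>{..<r}. M #> x [^] i) = (\<Sum>i\<in>{..<r}. card (M #> x [^] i))"
    proof (rule card_UN_disjoint)
      show "\<forall>i\<in>{..<r}. finite (M #> x [^] i)"
        using fin x N.subset by (auto intro: finite_subset[OF r_coset_subset_G])
      show "\<forall>i\<in>{..<r}. \<forall>j\<in>{..<r}. i \<noteq> j \<longrightarrow> (M #> x [^] i) \<inter> (M #> x [^] j) = {}"
      proof (intro ballI impI)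
        fix i j assume ij: "i \<in> {..<r}" "j \<in> {..<r}" "i \<noteq> j"
        have "M #> x [^] i \<noteq> M #> x [^] j" using Rinj ij by auto
        moreover have "M #> x [^] i \<in> rcosets M" "M #> x [^] j \<in> rcosets M"
          using x N.subset by (auto intro: rcosetsI)
        ultimately show "(M #> x [^] i) \<inter> (M #> x [^] j) = {}"
          using rcos_disjoint[OF sgM] unfolding pairwise_def disjnt_def by blast
      qed
    qed simp
    moreover have "card (M #> x [^] i) = card M" for i :: nat
      using card_rcosets_equal[of "M #> x [^] i" M] rcosetsI[of M "x [^] i"] x N.subset by simp
    ultimately show ?thesis by simp
  qed
  have "r dvd p ^ k" using cardG ord unfolding order_def by (metis dvd_triv_left)
  moreover have "r \<noteq> 1" using r(2) x by auto
  ultimately have pr: "p dvd r" using dvd_prime_pow_ne1[OF p] by blast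
  have rp: "r = p"
  proof (rule ccontr)
    assume "r \<noteq> p"
    then have "p < r" using pr r(1) dvd_imp_le by fastforce
    have p0: "0 < p" using p prime_gt_0_nat by blast
    have xpM: "x [^] p \<notin> M" using rmin[OF p0 \<open>p < r\<close>] .
    have xp: "x [^] p \<in> carrier G" using x by simp
    have "S (x [^] p) = carrier G"
    proof (rule ccontr)
      assume "S (x [^] p) \<noteq> carrier G"
      then have "S (x [^] p) = M" using maxM normal_pow_subgroup[OF fin N xp] unfolding S_def by blast
      then show False using normal_pow_subgroup(3)[OF fin N xp] xpM unfolding S_def by blast
    qed
    then obtain m i where mi: "x = m \<otimes> (x [^] p) [^] (i::nat)" "m \<in> M" using x unfolding S_def by blast
    then have "x = m \<otimes> x [^] (p * i)" using x by (simp add: nat_pow_pow)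
    then have "M #> x = M #> (m \<otimes> x [^] (p * i))" by (rule arg_cong)
    also have "\<dots> = M #> x [^] (p * i)" using coset_absorb[OF sgM mi(2)] x by simp
    finally have "M #> x = M #> x [^] (p * i)" .
    then have "M #> x [^] (1::nat) = M #> x [^] ((p * i) mod r)" using Rmod x by simp
    then have "1 = (p * i) mod r" using Rinj[of 1 "(p * i) mod r"] \<open>p < r\<close> p0 r(1) by simp
    then have "1 mod p = (p * i) mod r mod p" by simp
    also have "\<dots> = 0" using pr by (simp add: mod_mod_cancel)
    finally show False using p prime_gt_1_nat by auto
  qed
  define \<psi> where "\<psi> q = (THE i. i < p \<and> q \<in> M #> x [^] i)" for q
  have psi_eq: "\<psi> q = i" if "i < p" "q \<in> M #> x [^] i" for q i
    unfolding \<psi>_def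
  proof (rule the_equality)
    show "i < p \<and> q \<in> M #> x [^] i" using that by simp
    fix j assume j: "j < p \<and> q \<in> M #> x [^] j"
    have "M #> x [^] j = M #> q" using repr_independence[OF _ _ sgM] j x by simp
    moreover have "M #> x [^] i = M #> q" using repr_independence[OF _ _ sgM] that x by simp
    ultimately show "j = i" using Rinj[of j i] j that rp by simp
  qed
  have psi_spec: "\<psi> q < p \<and> q \<in> M #> x [^] \<psi> q" if qc: "q \<in> carrier G" for q
  proof -
    obtain i where "i < r" "q \<in> M #> x [^] i" using cover[OF qc] by blast
    then show ?thesis using psi_eq[of i q] rp by simp
  qed
  show ?thesis
  proof (intro exI conjI)
    show "\<psi> \<in> hom G (Zp p)"
    proof (rule homI)
      fix q assume "q \<in> carrier G" then show "\<psi> q \<in> carrier (Zp p)" using psi_spec by simp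
    next
      fix a b assume ab: "a \<in> carrier G" "b \<in> carrier G"
      define i where "i = \<psi> a"
      define j where "j = \<psi> b"
      obtain m1 where m1: "m1 \<in> M" "a = m1 \<otimes> x [^] i" using psi_spec[OF ab(1)] unfolding r_coset_def i_def by blast
      obtain m2 where m2: "m2 \<in> M" "b = m2 \<otimes> x [^] j" using psi_spec[OF ab(2)] unfolding r_coset_def j_def by blast
      have c: "m1 \<in> carrier G" "m2 \<in> carrier G" using m1 m2 N.subset by auto
      have conjM: "x [^] i \<otimes> m2 \<otimes> inv (x [^] i) \<in> M" using N.inv_op_closed2 m2 x by auto
      have e: "inv (x [^] i) \<otimes> (x [^] i \<otimes> x [^] j) = x [^] j" using x by (simp add: m_assoc[symmetric])
      have "a \<otimes> b = (m1 \<otimes> (x [^] i \<otimes> m2 \<otimes> inv (x [^] i))) \<otimes> x [^] (i + j)"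
        unfolding m1(2) m2(2) using c x e by (simp add: m_assoc nat_pow_mult[symmetric])
      moreover have mm: "m1 \<otimes> (x [^] i \<otimes> m2 \<otimes> inv (x [^] i)) \<in> M" using conjM m1 by (simp add: N.m_closed)
      ultimately have "a \<otimes> b \<in> M #> x [^] (i + j)" using x N.subset by (auto intro: rcosI)
      then have "a \<otimes> b \<in> M #> x [^] ((i + j) mod p)" using Rmod rp by simp
      then have "\<psi> (a \<otimes> b) = (i + j) mod p" using psi_eq p prime_gt_0_nat by simp
      then show "\<psi> (a \<otimes> b) = \<psi> a \<otimes>\<^bsub>Zp p\<^esub> \<psi> b" by (simp add: i_def j_def)
    qed
    show "\<forall>m\<in>M. \<psi> m = 0"
    proof
      fix m assume "m \<in> M"
      then have "m \<in> M #> x [^] (0::nat)" using N.subset by (simp add: coset_mult_one)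
      then show "\<psi> m = 0" using psi_eq p prime_gt_0_nat by blast
    qed
    have "x \<in> M #> x [^] (1::nat)" using x rcos_self[OF _ sgM] by simp
    then have "\<psi> x = 1" using psi_eq p prime_gt_1_nat by blast
    then show "\<exists>y\<in>carrier G. \<psi> y \<noteq> 0" using x by (intro bexI[of _ x]) auto
  qed
qed

lemma (in group) p_group_char:
  assumes fin: "finite (carrier G)" and p: "prime p" and ord: "order G = p ^ k"
    and H: "subgroup H G" "H \<noteq> carrier G"
  shows "\<exists>\<psi>. \<psi> \<in> hom G (Zp p) \<and> (\<forall>h\<in>H. \<psi> h = 0) \<and> (\<exists>y\<in>carrier G. \<psi> y \<noteq> 0)"
proof -
  define P where "P S = (subgroup S G \<and> H \<subseteq> S \<and> S \<noteq> carrier G)" for S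
  have "\<exists>M. P M \<and> (\<forall>S. P S \<longrightarrow> card S \<le> card M)"
  proof (rule Lattices_Big.ex_has_greatest_nat[of P H card "Suc (order G)"])
    show "P H" using H unfolding P_def by auto
    show "\<forall>S. P S \<longrightarrow> card S < Suc (order G)"
      unfolding P_def order_def using fin card_mono[OF fin subgroup.subset] by (simp add: le_imp_less_Suc)
  qed
  then obtain M where M: "P M" and Mmax: "\<And>S. P S \<Longrightarrow> card S \<le> card M" by blast
  have maxM: "S = M" if "subgroup S G" "M \<subseteq> S" "S \<noteq> carrier G" for S
  proof -
    have "P S" using that M unfolding P_def by auto
    then have "card S \<le> card M" by (rule Mmax)
    moreover have "finite S" using fin that(1) subgroup.subset finite_subset by blast
    ultimately show ?thesis using that(2) card_seteq by blast
  qed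
  have sgM: "subgroup M G" "M \<noteq> carrier G" using M unfolding P_def by auto
  have N: "M \<lhd> G" using p_group_maximal_normal[OF fin p ord sgM maxM] by blast
  obtain \<psi> where "\<psi> \<in> hom G (Zp p)" "\<forall>m\<in>M. \<psi> m = 0" "\<exists>y\<in>carrier G. \<psi> y \<noteq> 0"
    using max_normal_char[OF fin p ord N sgM(2) maxM] by blast
  then show ?thesis using M unfolding P_def by blast
qed

lemma continuous_map_into_discrete:
  assumes "f \<in> topspace X \<rightarrow> U" and "\<And>u. u \<in> U \<Longrightarrow> openin X {x \<in> topspace X. f x = u}"
  shows "continuous_map X (discrete_topology U) f"
  unfolding continuous_map_def
proof (intro conjI allI impI)
  show "f \<in> topspace X \<rightarrow> topspace (discrete_topology U)" using assms(1) by simp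
  fix V assume "openin (discrete_topology U) V"
  then have VU: "V \<subseteq> U" by simp
  have "{x \<in> topspace X. f x \<in> V} = (\<Union>u\<in>V. {x \<in> topspace X. f x = u})" by auto
  moreover have "openin X (\<Union>u\<in>V. {x \<in> topspace X. f x = u})"
    using assms(2) VU by (intro openin_Union) auto
  ultimately show "openin X {x \<in> topspace X. f x \<in> V}" by simp
qed

lemma continuous_map_discrete_fiber:
  assumes "continuous_map X (discrete_topology U) f" "u \<in> U"
  shows "openin X {x \<in> topspace X. f x = u}"
  using openin_continuous_map_preimage[OF assms(1), of "{u}"] assms(2) by simp

lemma topgroupD:
  assumes "topgroup P T"
  shows "group P" "topspace T = carrier P"
    "continuous_map (prod_topology T T) T (\<lambda>(x, y). x \<otimes>\<^bsub>P\<^esub> y)"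
    "continuous_map T T (\<lambda>x. inv\<^bsub>P\<^esub> x)"
  using assms unfolding topgroup_def by auto

lemma tg_mult2:
  assumes "topgroup P T" "continuous_map X T f" "continuous_map X T g"
  shows "continuous_map X T (\<lambda>z. f z \<otimes>\<^bsub>P\<^esub> g z)"
proof -
  have "continuous_map X (prod_topology T T) (\<lambda>z. (f z, g z))"
    using assms by (simp add: continuous_map_paired)
  from continuous_map_compose[OF this topgroupD(3)[OF assms(1)]]
  show ?thesis by (simp add: o_def)
qed

lemma tg_inv2:
  assumes "topgroup P T" "continuous_map X T f"
  shows "continuous_map X T (\<lambda>z. inv\<^bsub>P\<^esub> f z)"
  using continuous_map_compose[OF assms(2) topgroupD(4)[OF assms(1)]] by (simp add: o_def)

lemma tg_left:
  assumes "topgroup P T" "a \<in> carrier P"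
  shows "continuous_map T T (\<lambda>y. a \<otimes>\<^bsub>P\<^esub> y)"
  using tg_mult2[OF assms(1), of T "\<lambda>_. a" "\<lambda>y. y"] assms topgroupD(2)[OF assms(1)]
  by (simp add: continuous_map_id[unfolded id_def])

lemma tg_right:
  assumes "topgroup P T" "a \<in> carrier P"
  shows "continuous_map T T (\<lambda>y. y \<otimes>\<^bsub>P\<^esub> a)"
  using tg_mult2[OF assms(1), of T "\<lambda>y. y" "\<lambda>_. a"] assms topgroupD(2)[OF assms(1)]
  by (simp add: continuous_map_id[unfolded id_def])

lemma (in group) open_subgroupI:
  assumes tg: "topgroup G T" and S: "subgroup S G" and V: "openin T V" "\<one> \<in> V" "V \<subseteq> S"
  shows "openin T S"
proof -
  have top: "topspace T = carrier G" by (rule topgroupD(2)[OF tg])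
  show ?thesis
  proof (subst openin_subopen, intro ballI)
    fix h assume h: "h \<in> S"
    then have hc: "h \<in> carrier G" using subgroup.subset[OF S] by auto
    define W where "W = {y \<in> topspace T. inv h \<otimes> y \<in> V}"
    have "openin T W" unfolding W_def
      by (rule openin_continuous_map_preimage[OF tg_left[OF tg] V(1)]) (use hc in simp)
    moreover have "h \<in> W" unfolding W_def using hc top V(2) by simp
    moreover have "W \<subseteq> S"
    proof
      fix y assume "y \<in> W"
      then have y: "y \<in> carrier G" "inv h \<otimes> y \<in> V" unfolding W_def using top by auto
      then have "h \<otimes> (inv h \<otimes> y) \<in> S" using h V(3) subgroup.m_closed[OF S] by auto
      then show "y \<in> S" using hc y by (simp add: m_assoc[symmetric])
    qed
    ultimately show "\<exists>W. openin T W \<and> h \<in> W \<and> W \<subseteq> S" by blast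
  qed
qed

lemma (in group) inv_cancel_l':
  "x \<in> carrier G \<Longrightarrow> y \<in> carrier G \<Longrightarrow> inv x \<otimes> (x \<otimes> y) = y"
  by (simp add: m_assoc[symmetric])

lemma profiniteD:
  assumes "profinite_group P T"
  shows "topgroup P T" "compact_space T" "Hausdorff_space T"
    "\<And>x. x \<in> topspace T \<Longrightarrow> connected_component_of_set T x = {x}"
  using assms unfolding profinite_group_def by auto

lemma profinite_clopen:
  assumes pf: "profinite_group P T" and Op: "openin T Op" "a \<in> Op"
  shows "\<exists>U. openin T U \<and> closedin T U \<and> a \<in> U \<and> U \<subseteq> Op"
proof -
  have aT: "a \<in> topspace T" using Op openin_subset by auto
  have "separated_between T {a} (topspace T - Op)"
  proof (rule cut_wire_fence_theorem_gen)
    show "compact_space T" using profiniteD[OF pf] by simp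
    show "Hausdorff_space T \<or> regular_space T \<or> normal_space T" using profiniteD[OF pf] by simp
    show "compactin T {a}" using aT by simp
    show "closedin T (topspace T - Op)" using Op by auto
    fix C assume C: "connectedin T C"
    show "disjnt C {a} \<or> disjnt C (topspace T - Op)"
    proof (cases "C = {}")
      case True then show ?thesis by simp
    next
      case False
      then obtain c where c: "c \<in> C" by auto
      have cT: "c \<in> topspace T" using C c connectedin_subset_topspace by blast
      have "C \<subseteq> {c}" using connected_component_of_maximal[OF C c] profiniteD(4)[OF pf cT] by simp
      then have "C = {c}" using c by auto
      then show ?thesis using Op(2) by (cases "c = a") (auto simp: disjnt_def)
    qed
  qed
  then obtain U V where UV: "openin T U" "openin T V" "U \<union> V = topspace T" "disjnt U V" "{a} \<subseteq> U" "topspace T - Op \<subseteq> V"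
    unfolding separated_between_def by blast
  have "U = topspace T - V" using UV(3,4) by (auto simp: disjnt_def)
  then have "closedin T U" using UV(2) by auto
  moreover have "U \<subseteq> Op" using UV(3,4,6) openin_subset[OF UV(1)] by (auto simp: disjnt_def)
  ultimately show ?thesis using UV by blast
qed

lemma (in group) profinite_open_normal:
  assumes pf: "profinite_group G T" and Op: "openin T Op" "\<one> \<in> Op"
  shows "\<exists>N. N \<lhd> G \<and> openin T N \<and> N \<subseteq> Op"
proof -
  have tg: "topgroup G T" using profiniteD[OF pf] by simp
  have top: "topspace T = carrier G" by (rule topgroupD(2)[OF tg])
  have cpt: "compact_space T" using profiniteD[OF pf] by simp
  obtain U where U: "openin T U" "closedin T U" "\<one> \<in> U" "U \<subseteq> Op"
    using profinite_clopen[OF pf Op] by blast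
  have Uc: "U \<subseteq> carrier G" using openin_subset[OF U(1)] top by simp
  define W0 where "W0 = {z \<in> topspace (prod_topology T T). (\<lambda>(x, y). x \<otimes> y) z \<in> U}"
  have oW0: "openin (prod_topology T T) W0" unfolding W0_def
    by (rule openin_continuous_map_preimage[OF topgroupD(3)[OF tg] U(1)])
  have "U \<times> {\<one>} \<subseteq> W0" unfolding W0_def using Uc top by auto
  then obtain U1 V1 where UV1: "openin T U1" "openin T V1" "U \<subseteq> U1" "\<one> \<in> V1" "U1 \<times> V1 \<subseteq> W0"
    using tube_lemma_left[OF oW0 closedin_compact_space[OF cpt U(2)], of \<one>] top by auto
  have UV1m: "u \<otimes> v \<in> U" if "u \<in> U" "v \<in> V1" for u v
  proof -
    have "(u, v) \<in> U1 \<times> V1" using UV1(3) that by auto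
    then have "(u, v) \<in> W0" using UV1(5) by blast
    then show ?thesis unfolding W0_def by simp
  qed
  define V2 where "V2 = {v \<in> topspace T. v \<in> V1 \<and> inv v \<in> V1}"
  have oV2: "openin T V2"
  proof -
    have "openin T {v \<in> topspace T. inv v \<in> V1}"
      by (rule openin_continuous_map_preimage[OF topgroupD(4)[OF tg] UV1(2)])
    moreover have "V2 = V1 \<inter> {v \<in> topspace T. inv v \<in> V1}" unfolding V2_def using openin_subset[OF UV1(2)] by auto
    ultimately show ?thesis using UV1(2) by auto
  qed
  define H where "H = {g \<in> carrier G. \<forall>u\<in>U. u \<otimes> g \<in> U \<and> u \<otimes> inv g \<in> U}"
  have sgH: "subgroup H G"
  proof (rule subgroupI)
    show "H \<subseteq> carrier G" unfolding H_def by auto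
    have "\<one> \<in> H" unfolding H_def using Uc by auto
    then show "H \<noteq> {}" by auto
    fix a assume "a \<in> H" then show "inv a \<in> H" unfolding H_def by auto
  next
    fix a b assume ab: "a \<in> H" "b \<in> H"
    then have abc: "a \<in> carrier G" "b \<in> carrier G" unfolding H_def by auto
    have "u \<otimes> (a \<otimes> b) \<in> U \<and> u \<otimes> inv (a \<otimes> b) \<in> U" if u: "u \<in> U" for u
    proof
      have uc: "u \<in> carrier G" using u Uc by auto
      have "u \<otimes> a \<in> U" using ab u unfolding H_def by auto
      then have "(u \<otimes> a) \<otimes> b \<in> U" using ab unfolding H_def by auto
      then show "u \<otimes> (a \<otimes> b) \<in> U" using uc abc by (simp add: m_assoc)
      have "u \<otimes> inv b \<in> U" using ab u unfolding H_def by auto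
      then have "(u \<otimes> inv b) \<otimes> inv a \<in> U" using ab unfolding H_def by auto
      then show "u \<otimes> inv (a \<otimes> b) \<in> U" using uc abc by (simp add: m_assoc inv_mult_group)
    qed
    then show "a \<otimes> b \<in> H" unfolding H_def using abc by auto
  qed
  have V2H: "V2 \<subseteq> H" unfolding V2_def H_def using UV1m top by auto
  have oneV2: "\<one> \<in> V2" unfolding V2_def using UV1(4) top by auto
  have oH: "openin T H" by (rule open_subgroupI[OF tg sgH oV2 oneV2 V2H])
  have HU: "H \<subseteq> U" unfolding H_def using U(3) by auto
  define c where "c z = (fst z \<otimes> snd z) \<otimes> inv (fst z)" for z
  have cc: "continuous_map (prod_topology T T) T c"
    unfolding c_def
    by (intro tg_mult2[OF tg] tg_inv2[OF tg] continuous_map_fst continuous_map_snd)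
  define W1 where "W1 = {z \<in> topspace (prod_topology T T). c z \<in> H}"
  have oW1: "openin (prod_topology T T) W1" unfolding W1_def
    by (rule openin_continuous_map_preimage[OF cc oH])
  have "topspace T \<times> {\<one>} \<subseteq> W1" unfolding W1_def c_def using top subgroup.one_closed[OF sgH] by auto
  then obtain U3 V3 where UV3: "openin T U3" "openin T V3" "topspace T \<subseteq> U3" "\<one> \<in> V3" "U3 \<times> V3 \<subseteq> W1"
    using tube_lemma_left[OF oW1 cpt[unfolded compact_space_def], of \<one>] top by auto
  define N where "N = {h \<in> carrier G. \<forall>g\<in>carrier G. g \<otimes> h \<otimes> inv g \<in> H}"
  have sgN: "subgroup N G"
  proof (rule subgroupI)
    show "N \<subseteq> carrier G" unfolding N_def by auto
    have "\<one> \<in> N" unfolding N_def using subgroup.one_closed[OF sgH] by auto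
    then show "N \<noteq> {}" by auto
  next
    fix a assume a: "a \<in> N"
    then have ac: "a \<in> carrier G" unfolding N_def by auto
    have "g \<otimes> inv a \<otimes> inv g \<in> H" if g: "g \<in> carrier G" for g
    proof -
      have "inv (g \<otimes> a \<otimes> inv g) \<in> H" using a g subgroup.m_inv_closed[OF sgH] unfolding N_def by auto
      then show ?thesis using g ac by (simp add: inv_mult_group m_assoc)
    qed
    then show "inv a \<in> N" unfolding N_def using ac by auto
  next
    fix a b assume ab: "a \<in> N" "b \<in> N"
    then have abc: "a \<in> carrier G" "b \<in> carrier G" unfolding N_def by auto
    have "g \<otimes> (a \<otimes> b) \<otimes> inv g \<in> H" if g: "g \<in> carrier G" for g
    proof -
      have "(g \<otimes> a \<otimes> inv g) \<otimes> (g \<otimes> b \<otimes> inv g) \<in> H"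
        using ab g subgroup.m_closed[OF sgH] unfolding N_def by auto
      then show ?thesis using g abc by (simp add: m_assoc inv_cancel_l')
    qed
    then show "a \<otimes> b \<in> N" unfolding N_def using abc by auto
  qed
  have nN: "N \<lhd> G"
    unfolding normal_inv_iff
  proof (intro conjI sgN ballI)
    fix x h assume xh: "x \<in> carrier G" "h \<in> N"
    then have hc: "h \<in> carrier G" unfolding N_def by auto
    have "g \<otimes> (x \<otimes> h \<otimes> inv x) \<otimes> inv g \<in> H" if g: "g \<in> carrier G" for g
    proof -
      have "(g \<otimes> x) \<otimes> h \<otimes> inv (g \<otimes> x) \<in> H" using xh g unfolding N_def by auto
      then show ?thesis using g xh hc by (simp add: m_assoc inv_mult_group)
    qed
    then show "x \<otimes> h \<otimes> inv x \<in> N" unfolding N_def using xh hc by auto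
  qed
  have V3N: "V3 \<subseteq> N"
  proof
    fix h assume h: "h \<in> V3"
    then have hc: "h \<in> carrier G" using openin_subset[OF UV3(2)] top by auto
    have "g \<otimes> h \<otimes> inv g \<in> H" if "g \<in> carrier G" for g
    proof -
      have "(g, h) \<in> U3 \<times> V3" using UV3(3) h that top by auto
      then have "(g, h) \<in> W1" using UV3(5) by blast
      then show ?thesis unfolding W1_def c_def by simp
    qed
    then show "h \<in> N" unfolding N_def using hc by auto
  qed
  have oN: "openin T N" by (rule open_subgroupI[OF tg sgN UV3(2) UV3(4) V3N])
  have "N \<subseteq> H"
  proof
    fix h assume "h \<in> N"
    then have "h \<in> carrier G" "\<forall>g\<in>carrier G. g \<otimes> h \<otimes> inv g \<in> H" unfolding N_def by auto
    then have "\<one> \<otimes> h \<otimes> inv \<one> \<in> H" "h \<in> carrier G" using bspec[of _ _ \<one>] by blast+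
    then show "h \<in> H" by simp
  qed
  then show ?thesis using nN oN HU U(4) by blast
qed

lemma (in group) pro_p_char:
  assumes pp: "pro_p_group p G T" and K: "subgroup K G" and cl: "T closure_of K \<noteq> carrier G"
  shows "\<exists>chi. cont_hom G T (Zp p) (discrete_topology (carrier (Zp p))) chi \<and> (\<forall>k\<in>K. chi k = 0) \<and> (\<exists>y\<in>carrier G. chi y \<noteq> 0)"
proof -
  have p: "prime p" and pf: "profinite_group G T"
    and idx: "\<And>N. N \<lhd> G \<Longrightarrow> openin T N \<Longrightarrow> \<exists>k. card (rcosets N) = p ^ k"
    using pp unfolding pro_p_group_def by auto
  have tg: "topgroup G T" using profiniteD[OF pf] by simp
  have top: "topspace T = carrier G" by (rule topgroupD(2)[OF tg])
  have Kc: "K \<subseteq> carrier G" using subgroup.subset[OF K] .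
  have "T closure_of K \<subseteq> carrier G" using closure_of_subset_topspace top by metis
  then obtain x where x: "x \<in> carrier G" "x \<notin> T closure_of K" using cl by blast
  define Op where "Op = topspace T - T closure_of K"
  have oOp: "openin T Op" unfolding Op_def by (simp add: closedin_closure_of openin_diff)
  have KOp: "k \<notin> Op" if "k \<in> K" for k
    using that closure_of_subset[of K T] Kc top unfolding Op_def by auto
  define Op' where "Op' = {y \<in> topspace T. y \<otimes> x \<in> Op}"
  have oOp': "openin T Op'" unfolding Op'_def
    by (rule openin_continuous_map_preimage[OF tg_right[OF tg x(1)] oOp])
  have "\<one> \<in> Op'" unfolding Op'_def Op_def using x top by auto
  then obtain N where N: "N \<lhd> G" "openin T N" "N \<subseteq> Op'"
    using profinite_open_normal[OF pf oOp'] by blast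
  interpret NN: normal N G by (rule N(1))
  obtain k where ck: "card (rcosets N) = p ^ k" using idx[OF N(1,2)] by blast
  have finQ: "finite (rcosets N)" using ck p by (metis card.infinite power_not_zero not_prime_0)
  define Q where "Q = G Mod N"
  have gQ: "group Q" unfolding Q_def by (rule NN.factorgroup_is_group)
  have cQ: "carrier Q = rcosets N" unfolding Q_def FactGroup_def by simp
  have hom_proj: "(\<lambda>a. N #> a) \<in> hom G Q" unfolding Q_def by (rule NN.r_coset_hom_Mod)
  interpret gh: group_hom G Q "\<lambda>a. N #> a" using gQ hom_proj is_group
    by (simp add: group_hom_def group_hom_axioms_def)
  define Hb where "Hb = (\<lambda>a. N #> a) ` K"
  have sgHb: "subgroup Hb Q" unfolding Hb_def by (rule gh.subgroup_img_is_subgroup[OF K])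
  have xnot: "N #> x \<notin> Hb"
  proof
    assume "N #> x \<in> Hb"
    then obtain k where k: "k \<in> K" "N #> x = N #> k" unfolding Hb_def by auto
    have kc: "k \<in> carrier G" using k Kc by auto
    have "k \<in> N #> x" using k(2) rcos_self[OF kc NN.subgroup_axioms] by simp
    then obtain n where n: "n \<in> N" "k = n \<otimes> x" unfolding r_coset_def by auto
    then have "n \<in> Op'" using N(3) by auto
    then have "k \<in> Op" unfolding Op'_def using n by simp
    then show False using KOp k by auto
  qed
  have "N #> x \<in> carrier Q" using cQ x NN.subset by (auto intro: rcosetsI)
  then have Hbne: "Hb \<noteq> carrier Q" using xnot by auto
  obtain \<psi> where psi: "\<psi> \<in> hom Q (Zp p)" "\<forall>h\<in>Hb. \<psi> h = 0" "\<exists>Y\<in>carrier Q. \<psi> Y \<noteq> 0"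
  proof -
    have "finite (carrier Q)" "order Q = p ^ k" using finQ cQ ck unfolding order_def by auto
    from group.p_group_char[OF gQ this(1) p this(2) sgHb Hbne] show ?thesis using that by blast
  qed
  define chi where "chi a = \<psi> (N #> a)" for a
  have homchi: "chi \<in> hom G (Zp p)"
  proof (rule homI)
    fix a assume "a \<in> carrier G"
    then show "chi a \<in> carrier (Zp p)" unfolding chi_def using psi(1) gh.hom_closed unfolding hom_def by auto
  next
    fix a b assume ab: "a \<in> carrier G" "b \<in> carrier G"
    have "chi (a \<otimes> b) = \<psi> ((N #> a) \<otimes>\<^bsub>Q\<^esub> (N #> b))" unfolding chi_def using ab gh.hom_mult by simp
    also have "\<dots> = \<psi> (N #> a) \<otimes>\<^bsub>Zp p\<^esub> \<psi> (N #> b)"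
      using psi(1) ab gh.hom_closed by (simp add: hom_mult)
    finally show "chi (a \<otimes> b) = chi a \<otimes>\<^bsub>Zp p\<^esub> chi b" unfolding chi_def .
  qed
  have cont: "continuous_map T (discrete_topology (carrier (Zp p))) chi"
  proof (rule continuous_map_into_discrete)
    show "chi \<in> topspace T \<rightarrow> carrier (Zp p)" using homchi top unfolding hom_def by auto
    fix u assume "u \<in> carrier (Zp p)"
    show "openin T {y \<in> topspace T. chi y = u}"
    proof (subst openin_subopen, intro ballI)
      fix g assume g: "g \<in> {y \<in> topspace T. chi y = u}"
      then have gc: "g \<in> carrier G" using top by auto
      define W where "W = {y \<in> topspace T. y \<otimes> inv g \<in> N}"
      have "openin T W" unfolding W_def
        by (rule openin_continuous_map_preimage[OF tg_right[OF tg] N(2)]) (use gc in simp)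
      moreover have "g \<in> W" unfolding W_def using gc top by auto
      moreover have "W \<subseteq> {y \<in> topspace T. chi y = u}"
      proof
        fix y assume "y \<in> W"
        then have y: "y \<in> carrier G" "y \<otimes> inv g \<in> N" unfolding W_def using top by auto
        then have "y \<in> N #> g" using NN.rcos_module_rev[OF is_group gc] by auto
        then have "N #> g = N #> y" using repr_independence[OF _ gc NN.subgroup_axioms] by simp
        then show "y \<in> {y \<in> topspace T. chi y = u}" using g y top unfolding chi_def by auto
      qed
      ultimately show "\<exists>W. openin T W \<and> g \<in> W \<and> W \<subseteq> {y \<in> topspace T. chi y = u}" by blast
    qed
  qed
  show ?thesis
  proof (intro exI conjI)
    show "cont_hom G T (Zp p) (discrete_topology (carrier (Zp p))) chi"
      unfolding cont_hom_def using homchi cont by simp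
    show "\<forall>k\<in>K. chi k = 0" using psi(2) unfolding chi_def Hb_def by auto
    obtain Y where Y: "Y \<in> carrier Q" "\<psi> Y \<noteq> 0" using psi(3) by blast
    then obtain y where "y \<in> carrier G" "Y = N #> y" using cQ unfolding RCOSETS_def by auto
    then show "\<exists>y\<in>carrier G. chi y \<noteq> 0" using Y unfolding chi_def by auto
  qed
qed

lemma zero_cont_hom:
  assumes "0 < p" "topspace T = carrier P"
  shows "cont_hom P T (Zp p) (discrete_topology (carrier (Zp p))) (\<lambda>_. 0)"
  unfolding cont_hom_def using assms by (auto intro!: homI)

lemma (in group) eq_on_generated:
  assumes tg: "topgroup G T" and p: "0 < p"
    and f1: "cont_hom G T (Zp p) (discrete_topology (carrier (Zp p))) f1"
    and f2: "cont_hom G T (Zp p) (discrete_topology (carrier (Zp p))) f2"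
    and Y: "Y \<subseteq> carrier G" "T closure_of (generate G Y) = carrier G"
    and eq: "\<And>y. y \<in> Y \<Longrightarrow> f1 y = f2 y"
    and g: "g \<in> carrier G"
  shows "f1 g = f2 g"
proof -
  have top: "topspace T = carrier G" by (rule topgroupD(2)[OF tg])
  have gZ: "group (Zp p)" by (rule group_Zp[OF p])
  have h1: "group_hom G (Zp p) f1" using f1 gZ is_group unfolding cont_hom_def group_hom_def group_hom_axioms_def by auto
  have h2: "group_hom G (Zp p) f2" using f2 gZ is_group unfolding cont_hom_def group_hom_def group_hom_axioms_def by auto
  have c1: "continuous_map T (discrete_topology (carrier (Zp p))) f1" using f1 unfolding cont_hom_def by auto
  have c2: "continuous_map T (discrete_topology (carrier (Zp p))) f2" using f2 unfolding cont_hom_def by auto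
  define E where "E = {x \<in> carrier G. f1 x = f2 x}"
  have sgE: "subgroup E G"
  proof (rule subgroupI)
    show "E \<subseteq> carrier G" unfolding E_def by auto
    have "\<one> \<in> E" unfolding E_def using group_hom.hom_one[OF h1] group_hom.hom_one[OF h2] by simp
    then show "E \<noteq> {}" by auto
    fix a assume "a \<in> E" then show "inv a \<in> E" unfolding E_def
      using group_hom.hom_inv[OF h1] group_hom.hom_inv[OF h2] by simp
  next
    fix a b assume "a \<in> E" "b \<in> E" then show "a \<otimes> b \<in> E" unfolding E_def
      using group_hom.hom_mult[OF h1] group_hom.hom_mult[OF h2] by simp
  qed
  have clE: "closedin T E"
  proof -
    have "openin T (topspace T - E)"
    proof (subst openin_subopen, intro ballI)
      fix x assume x: "x \<in> topspace T - E"
      then have xc: "x \<in> carrier G" using top by auto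
      have v1: "f1 x \<in> carrier (Zp p)" "f2 x \<in> carrier (Zp p)" using c1 c2 x unfolding continuous_map_def by auto
      define W where "W = {y \<in> topspace T. f1 y = f1 x} \<inter> {y \<in> topspace T. f2 y = f2 x}"
      have "openin T W" unfolding W_def
        using continuous_map_discrete_fiber[OF c1 v1(1)] continuous_map_discrete_fiber[OF c2 v1(2)] by auto
      moreover have "x \<in> W" unfolding W_def using x by auto
      moreover have "W \<subseteq> topspace T - E"
      proof
        fix y assume "y \<in> W"
        then have "f1 y = f1 x" "f2 y = f2 x" "y \<in> topspace T" unfolding W_def by auto
        moreover have "f1 x \<noteq> f2 x" using x xc unfolding E_def by auto
        ultimately show "y \<in> topspace T - E" unfolding E_def by auto
      qed
      ultimately show "\<exists>W. openin T W \<and> x \<in> W \<and> W \<subseteq> topspace T - E" by blast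
    qed
    moreover have "E \<subseteq> topspace T" unfolding E_def using top by auto
    ultimately show ?thesis unfolding closedin_def by auto
  qed
  have "Y \<subseteq> E" unfolding E_def using Y(1) eq by auto
  then have "generate G Y \<subseteq> E" using generate_subgroup_incl[OF _ sgE] by blast
  then have "T closure_of (generate G Y) \<subseteq> E" using closure_of_minimal[OF _ clE] by blast
  then show ?thesis using g Y(2) unfolding E_def by auto
qed

lemma mod_cancel_prime:
  fixes a b c p :: nat
  assumes p: "prime p" and ab: "a < p" "b < p" and c: "0 < c" "c < p"
    and eq: "(a * c) mod p = (b * c) mod p"
  shows "a = b"
proof -
  have ndc: "\<not> p dvd c"
  proof
    assume "p dvd c" then have "p \<le> c" using c(1) by (rule dvd_imp_le)
    then show False using c(2) by simp
  qed
  have *: "x = y" if xy: "y \<le> x" "x < p" "(x * c) mod p = (y * c) mod p" for x y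
  proof -
    have le: "y * c \<le> x * c" using xy(1) by simp
    have "p dvd x * c - y * c" using mod_eq_dvd_iff_nat[OF le] xy(3) by simp
    then have "p dvd (x - y) * c" by (simp add: diff_mult_distrib)
    then have "p dvd (x - y)" using p ndc prime_dvd_mult_iff by blast
    moreover have "x - y < p" using xy by simp
    ultimately have "x - y = 0" using dvd_imp_le not_less by blast
    then show ?thesis using xy(1) by simp
  qed
  show ?thesis
  proof (cases "b \<le> a")
    case True then show ?thesis using *[of b a] ab eq by simp
  next
    case False then show ?thesis using *[of a b] ab eq by simp
  qed
qed

lemma (in group) lincomb_cont_hom:
  assumes tg: "topgroup G T" and p: "0 < p" and fin: "finite V"
    and ch: "\<And>v. v \<in> V \<Longrightarrow> cont_hom G T (Zp p) (discrete_topology (carrier (Zp p))) (chi v)"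
  shows "cont_hom G T (Zp p) (discrete_topology (carrier (Zp p))) (\<lambda>g. (\<Sum>v\<in>V. d v * chi v g) mod p)"
proof -
  have top: "topspace T = carrier G" by (rule topgroupD(2)[OF tg])
  have hm: "chi v (a \<otimes> b) = (chi v a + chi v b) mod p" if "v \<in> V" "a \<in> carrier G" "b \<in> carrier G" for v a b
    using ch[OF that(1)] that(2,3) unfolding cont_hom_def hom_def by auto
  have hc: "continuous_map T (discrete_topology (carrier (Zp p))) (chi v)" if "v \<in> V" for v
    using ch[OF that] unfolding cont_hom_def by auto
  have hom: "(\<lambda>g. (\<Sum>v\<in>V. d v * chi v g) mod p) \<in> hom G (Zp p)"
  proof (rule homI)
    fix a assume "a \<in> carrier G" then show "(\<Sum>v\<in>V. d v * chi v a) mod p \<in> carrier (Zp p)" using p by simp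
  next
    fix a b assume ab: "a \<in> carrier G" "b \<in> carrier G"
    have "(\<Sum>v\<in>V. d v * chi v (a \<otimes> b)) mod p = (\<Sum>v\<in>V. d v * ((chi v a + chi v b) mod p)) mod p"
      using hm ab by (intro arg_cong[where f="\<lambda>x. x mod p"] sum.cong) auto
    also have "\<dots> = (\<Sum>v\<in>V. (d v * ((chi v a + chi v b) mod p)) mod p) mod p" by (simp add: mod_sum_eq)
    also have "\<dots> = (\<Sum>v\<in>V. (d v * (chi v a + chi v b)) mod p) mod p" by (simp add: mod_mult_right_eq)
    also have "\<dots> = (\<Sum>v\<in>V. d v * (chi v a + chi v b)) mod p" by (simp add: mod_sum_eq)
    also have "\<dots> = ((\<Sum>v\<in>V. d v * chi v a) + (\<Sum>v\<in>V. d v * chi v b)) mod p"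
      by (simp add: distrib_left sum.distrib)
    also have "\<dots> = ((\<Sum>v\<in>V. d v * chi v a) mod p + (\<Sum>v\<in>V. d v * chi v b) mod p) mod p"
      by (simp add: mod_add_eq)
    finally have X: "(\<Sum>v\<in>V. d v * chi v (a \<otimes> b)) mod p =
      ((\<Sum>v\<in>V. d v * chi v a) mod p + (\<Sum>v\<in>V. d v * chi v b) mod p) mod p" .
    show "(\<lambda>g. (\<Sum>v\<in>V. d v * chi v g) mod p) (a \<otimes> b) =
      (\<lambda>g. (\<Sum>v\<in>V. d v * chi v g) mod p) a \<otimes>\<^bsub>Zp p\<^esub> (\<lambda>g. (\<Sum>v\<in>V. d v * chi v g) mod p) b"
      using X by (simp only: Zp_simps)
  qed
  have cont: "continuous_map T (discrete_topology (carrier (Zp p))) (\<lambda>g. (\<Sum>v\<in>V. d v * chi v g) mod p)"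
  proof (rule continuous_map_into_discrete)
    show "(\<lambda>g. (\<Sum>v\<in>V. d v * chi v g) mod p) \<in> topspace T \<rightarrow> carrier (Zp p)" using p by simp
    fix u assume "u \<in> carrier (Zp p)"
    show "openin T {x \<in> topspace T. (\<Sum>v\<in>V. d v * chi v x) mod p = u}"
    proof (subst openin_subopen, intro ballI)
      fix x assume x: "x \<in> {x \<in> topspace T. (\<Sum>v\<in>V. d v * chi v x) mod p = u}"
      define W where "W = (\<Inter>v\<in>V. {y \<in> topspace T. chi v y = chi v x}) \<inter> topspace T"
      have "openin T W" unfolding W_def
      proof (rule openin_INT[OF fin])
        fix v assume v: "v \<in> V"
        have "chi v x \<in> carrier (Zp p)" using hc[OF v] x unfolding continuous_map_def by auto
        then show "openin T {y \<in> topspace T. chi v y = chi v x}" by (rule continuous_map_discrete_fiber[OF hc[OF v]])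
      qed
      moreover have "x \<in> W" unfolding W_def using x by auto
      moreover have "W \<subseteq> {x \<in> topspace T. (\<Sum>v\<in>V. d v * chi v x) mod p = u}"
      proof
        fix y assume "y \<in> W"
        then have "y \<in> topspace T" "\<forall>v\<in>V. chi v y = chi v x" unfolding W_def by auto
        moreover then have "(\<Sum>v\<in>V. d v * chi v y) = (\<Sum>v\<in>V. d v * chi v x)" by (intro sum.cong) auto
        ultimately show "y \<in> {x \<in> topspace T. (\<Sum>v\<in>V. d v * chi v x) mod p = u}" using x by auto
      qed
      ultimately show "\<exists>W. openin T W \<and> x \<in> W \<and> W \<subseteq> {x \<in> topspace T. (\<Sum>v\<in>V. d v * chi v x) mod p = u}" by blast
    qed
  qed
  show ?thesis unfolding cont_hom_def using hom cont by simp
qed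

lemma edge_char:
  assumes pe: "pro_p_group p E ET" and pv: "pro_p_group p P PT"
    and b: "cont_mono E ET P PT b" and ne: "b ` carrier E \<noteq> carrier P"
  shows "\<exists>c. cont_hom P PT (Zp p) (discrete_topology (carrier (Zp p))) c \<and>
            (\<forall>g\<in>carrier E. c (b g) = 0) \<and> (\<exists>a\<in>carrier P. c a \<noteq> 0)"
proof -
  have pfE: "profinite_group E ET" and pfP: "profinite_group P PT"
    using pe pv unfolding pro_p_group_def by auto
  have tgE: "topgroup E ET" and tgP: "topgroup P PT" using profiniteD pfE pfP by auto
  have gE: "group E" and gP: "group P" using topgroupD tgE tgP by auto
  have bh: "b \<in> hom E P" and bc: "continuous_map ET PT b"
    using b unfolding cont_mono_def cont_hom_def by auto
  interpret bh: group_hom E P b using gE gP bh by (simp add: group_hom_def group_hom_axioms_def)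
  have sg: "subgroup (b ` carrier E) P" by (rule bh.img_is_subgroup)
  have "compactin ET (topspace ET)" using profiniteD(2)[OF pfE] unfolding compact_space_def .
  then have "compactin PT (b ` carrier E)" using image_compactin[OF _ bc] topgroupD(2)[OF tgE] by metis
  then have "closedin PT (b ` carrier E)" using compactin_imp_closedin profiniteD(3)[OF pfP] by blast
  then have "PT closure_of (b ` carrier E) = b ` carrier E" by (simp add: closure_of_closedin)
  then have "PT closure_of (b ` carrier E) \<noteq> carrier P" using ne by simp
  from group.pro_p_char[OF gP pv sg this] show ?thesis by auto
qed

lemma no_loop:
  assumes "\<not> has_circuit Vs Es d0 d1" "e \<in> Es"
  shows "d0 e \<noteq> d1 e"
proof
  assume eq: "d0 e = d1 e"
  have "has_circuit Vs Es d0 d1" unfolding has_circuit_def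
    by (rule exI[of _ "[e]"], rule exI[of _ "[d0 e, d0 e]"]) (use assms(2) eq in auto)
  then show False using assms(1) by simp
qed

theorem lemma2p20:
  fixes p :: nat
    and Vs :: "'v set" and Es :: "'e set" and d0 d1 :: "'e \<Rightarrow> 'v"
    and VG :: "'v \<Rightarrow> ('a, 'b) monoid_scheme" and VT :: "'v \<Rightarrow> 'a topology"
    and EG :: "'e \<Rightarrow> ('a, 'b) monoid_scheme" and ET :: "'e \<Rightarrow> 'a topology"
    and b0 b1 :: "'e \<Rightarrow> 'a \<Rightarrow> 'a"
    and G :: "('g, 'h) monoid_scheme" and T :: "'g topology" and iota :: "'v \<Rightarrow> 'a \<Rightarrow> 'g"
    and V :: "'v set"
  assumes "Factorial_Ring.prime p"
    and "tree_of_pro_p_groups p Vs Es d0 d1 VG VT EG ET b0 b1"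
    and "reduced_tree Es d0 d1 VG EG b0 b1"
    and "fundamental_pro_p_group p Vs Es d0 d1 VG VT EG b0 b1 G T iota"
    and "proper_tree Vs VG iota"
    and "V \<subseteq> Vs"
    and "generated_by_vertices G T VG iota V"
    and "\<And>W. W \<subset> V \<Longrightarrow> \<not> generated_by_vertices G T VG iota W"
  shows "{v. pending_vertex Vs Es d0 d1 v} \<subseteq> V \<and> enat (card V) \<le> dgen G T"
proof -
  have p: "prime p" using assms(1) .
  have p0: "0 < p" using p prime_gt_0_nat by blast
  have ft: "finite_tree Vs Es d0 d1"
    and vpp: "\<And>v. v \<in> Vs \<Longrightarrow> pro_p_group p (VG v) (VT v)"
    and epp: "\<And>e. e \<in> Es \<Longrightarrow> pro_p_group p (EG e) (ET e)"
    and eb0: "\<And>e. e \<in> Es \<Longrightarrow> cont_mono (EG e) (ET e) (VG (d0 e)) (VT (d0 e)) (b0 e)"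
    and eb1: "\<And>e. e \<in> Es \<Longrightarrow> cont_mono (EG e) (ET e) (VG (d1 e)) (VT (d1 e)) (b1 e)"
    using assms(2) unfolding tree_of_pro_p_groups_def by auto
  have ppG: "pro_p_group p G T"
    and compG: "compatible_family Vs Es d0 d1 VG VT EG b0 b1 G T iota"
    and univ: "\<And>(H :: nat monoid) f. finite_p_group p H \<Longrightarrow>
        compatible_family Vs Es d0 d1 VG VT EG b0 b1 H (discrete_topology (carrier H)) f \<Longrightarrow>
        (\<exists>!phi. phi \<in> extensional (carrier G) \<and>
           cont_hom G T H (discrete_topology (carrier H)) phi \<and>
           (\<forall>v \<in> Vs. \<forall>x \<in> carrier (VG v). phi (iota v x) = f v x))"
    using assms(4) unfolding fundamental_pro_p_group_def by auto
  have pfG: "profinite_group G T" using ppG unfolding pro_p_group_def by auto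
  have tgG: "topgroup G T" using profiniteD(1)[OF pfG] .
  have gG: "group G" using topgroupD(1)[OF tgG] .
  have topG: "topspace T = carrier G" using topgroupD(2)[OF tgG] .
  have iota_c: "iota v x \<in> carrier G" if "v \<in> Vs" "x \<in> carrier (VG v)" for v x
    using compG that unfolding compatible_family_def cont_hom_def hom_def by auto
  define Gen where "Gen W = (\<Union>v\<in>W. iota v ` carrier (VG v))" for W
  have GenSub: "Gen W \<subseteq> carrier G" if "W \<subseteq> Vs" for W
    using iota_c that unfolding Gen_def by auto
  have genV: "T closure_of (generate G (Gen V)) = carrier G"
    using assms(7) unfolding generated_by_vertices_def top_generates_def Gen_def by auto
  have notgen: "T closure_of (generate G (Gen W)) \<noteq> carrier G" if "W \<subset> V" for W
    using assms(8)[OF that] GenSub[of W] that assms(6)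
    unfolding generated_by_vertices_def top_generates_def Gen_def by auto
  have gZ: "finite_p_group p (Zp p)" by (rule finite_p_group_Zp[OF p])
  have part1: "{v. pending_vertex Vs Es d0 d1 v} \<subseteq> V"
  proof
    fix v assume "v \<in> {v. pending_vertex Vs Es d0 d1 v}"
    then have vVs: "v \<in> Vs" and c1: "card {e \<in> Es. d0 e = v \<or> d1 e = v} = 1"
      unfolding pending_vertex_def by auto
    show "v \<in> V"
    proof (rule ccontr)
      assume vV: "v \<notin> V"
      obtain e where Eset: "{e \<in> Es. d0 e = v \<or> d1 e = v} = {e}" using c1 card_1_singletonE by blast
      then have eEs: "e \<in> Es" and inc: "d0 e = v \<or> d1 e = v" by auto
      have others: "e' = e" if "e' \<in> Es" "d0 e' = v \<or> d1 e' = v" for e'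
        using Eset that by auto
      have nl: "d0 e \<noteq> d1 e" using no_loop[OF _ eEs] ft unfolding finite_tree_def by auto
      have red: "b0 e ` carrier (EG e) \<noteq> carrier (VG (d0 e))" "b1 e ` carrier (EG e) \<noteq> carrier (VG (d1 e))"
        using assms(3) eEs unfolding reduced_tree_def by auto
      obtain c where c: "cont_hom (VG v) (VT v) (Zp p) (discrete_topology (carrier (Zp p))) c"
        and ca: "\<exists>a\<in>carrier (VG v). c a \<noteq> 0"
        and ck0: "d0 e = v \<Longrightarrow> \<forall>g\<in>carrier (EG e). c (b0 e g) = 0"
        and ck1: "d1 e = v \<Longrightarrow> \<forall>g\<in>carrier (EG e). c (b1 e g) = 0"
      proof (cases "d0 e = v")
        case True
        have "d1 e \<in> Vs" using ft eEs unfolding finite_tree_def by auto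
        obtain c where "cont_hom (VG (d0 e)) (VT (d0 e)) (Zp p) (discrete_topology (carrier (Zp p))) c"
            "\<forall>g\<in>carrier (EG e). c (b0 e g) = 0" "\<exists>a\<in>carrier (VG (d0 e)). c a \<noteq> 0"
          using edge_char[OF epp[OF eEs] vpp eb0[OF eEs] red(1)] True vVs by blast
        then show ?thesis using that True nl by auto
      next
        case False
        then have T1: "d1 e = v" using inc by auto
        obtain c where "cont_hom (VG (d1 e)) (VT (d1 e)) (Zp p) (discrete_topology (carrier (Zp p))) c"
            "\<forall>g\<in>carrier (EG e). c (b1 e g) = 0" "\<exists>a\<in>carrier (VG (d1 e)). c a \<noteq> 0"
          using edge_char[OF epp[OF eEs] vpp eb1[OF eEs] red(2)] T1 vVs by blast
        then show ?thesis using that T1 False by auto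
      qed
      define f where "f u = (if u = v then c else (\<lambda>_. 0::nat))" for u
      have compf: "compatible_family Vs Es d0 d1 VG VT EG b0 b1 (Zp p) (discrete_topology (carrier (Zp p))) f"
        unfolding compatible_family_def
      proof (intro conjI ballI)
        fix u assume u: "u \<in> Vs"
        have "topspace (VT u) = carrier (VG u)"
          using vpp[OF u] unfolding pro_p_group_def profinite_group_def topgroup_def by auto
        then show "cont_hom (VG u) (VT u) (Zp p) (discrete_topology (carrier (Zp p))) (f u)"
          unfolding f_def using c zero_cont_hom[OF p0] by auto
      next
        fix e' g assume e': "e' \<in> Es" and g: "g \<in> carrier (EG e')"
        show "f (d0 e') (b0 e' g) = f (d1 e') (b1 e' g)"
        proof (cases "d0 e' = v \<or> d1 e' = v")
          case False then show ?thesis unfolding f_def by auto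
        next
          case True
          then have "e' = e" using others e' by auto
          then show ?thesis using ck0 ck1 nl g unfolding f_def by auto
        qed
      qed
      obtain phi where phi: "cont_hom G T (Zp p) (discrete_topology (carrier (Zp p))) phi"
        "\<forall>u \<in> Vs. \<forall>x \<in> carrier (VG u). phi (iota u x) = f u x"
        using univ[OF gZ compf] by blast
      have zero: "phi g = 0" if "g \<in> carrier G" for g
      proof (rule group.eq_on_generated[OF gG tgG p0 phi(1) zero_cont_hom[OF p0 topG] GenSub[OF assms(6)] genV _ that])
        fix y assume "y \<in> Gen V"
        then obtain u x where "u \<in> V" "x \<in> carrier (VG u)" "y = iota u x" unfolding Gen_def by auto
        then show "phi y = 0" using phi(2) assms(6) vV unfolding f_def by auto
      qed
      obtain a where a: "a \<in> carrier (VG v)" "c a \<noteq> 0" using ca by blast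
      have "phi (iota v a) = c a" using phi(2) vVs a unfolding f_def by auto
      then show False using zero[OF iota_c[OF vVs a(1)]] a by simp
    qed
  qed
  have finV: "finite V" using ft assms(6) finite_subset unfolding finite_tree_def by auto
  have "\<forall>v\<in>V. \<exists>c. cont_hom G T (Zp p) (discrete_topology (carrier (Zp p))) c \<and>
            (\<forall>k\<in>generate G (Gen (V - {v})). c k = 0) \<and> (\<exists>y\<in>carrier G. c y \<noteq> 0)"
  proof
    fix v assume v: "v \<in> V"
    have sub: "Gen (V - {v}) \<subseteq> carrier G" using GenSub[of "V - {v}"] assms(6) by blast
    have "V - {v} \<subset> V" using v by auto
    from group.pro_p_char[OF gG ppG group.generate_is_subgroup[OF gG sub] notgen[OF this]]
    show "\<exists>c. cont_hom G T (Zp p) (discrete_topology (carrier (Zp p))) c \<and>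
            (\<forall>k\<in>generate G (Gen (V - {v})). c k = 0) \<and> (\<exists>y\<in>carrier G. c y \<noteq> 0)" .
  qed
  then obtain chi where chi: "\<And>v. v \<in> V \<Longrightarrow> cont_hom G T (Zp p) (discrete_topology (carrier (Zp p))) (chi v)"
    "\<And>v. v \<in> V \<Longrightarrow> \<forall>k\<in>generate G (Gen (V - {v})). chi v k = 0"
    "\<And>v. v \<in> V \<Longrightarrow> \<exists>y\<in>carrier G. chi v y \<noteq> 0"
    by metis
  have kill: "chi u (iota w x) = 0" if "u \<in> V" "w \<in> V" "w \<noteq> u" "x \<in> carrier (VG w)" for u w x
  proof -
    have "iota w x \<in> Gen (V - {u})" unfolding Gen_def using that by auto
    then have "iota w x \<in> generate G (Gen (V - {u}))" by (rule generate.incl)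
    then show ?thesis using chi(2)[OF that(1)] by auto
  qed
  have "\<forall>v\<in>V. \<exists>a. a \<in> carrier (VG v) \<and> chi v (iota v a) \<noteq> 0"
  proof
    fix v assume v: "v \<in> V"
    show "\<exists>a. a \<in> carrier (VG v) \<and> chi v (iota v a) \<noteq> 0"
    proof (rule ccontr)
      assume na: "\<not> ?thesis"
      have "chi v g = 0" if "g \<in> carrier G" for g
      proof (rule group.eq_on_generated[OF gG tgG p0 chi(1)[OF v] zero_cont_hom[OF p0 topG] GenSub[OF assms(6)] genV _ that])
        fix y assume "y \<in> Gen V"
        then obtain u x where ux: "u \<in> V" "x \<in> carrier (VG u)" "y = iota u x" unfolding Gen_def by auto
        show "chi v y = 0"
        proof (cases "u = v")
          case True then show ?thesis using na ux by auto
        next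
          case False then show ?thesis using kill[OF v ux(1) False ux(2)] ux by simp
        qed
      qed
      then show False using chi(3)[OF v] by auto
    qed
  qed
  then obtain a where a: "\<And>v. v \<in> V \<Longrightarrow> a v \<in> carrier (VG v)" "\<And>v. v \<in> V \<Longrightarrow> chi v (iota v (a v)) \<noteq> 0"
    by metis
  have part2: "enat (card V) \<le> dgen G T"
    unfolding dgen_def
  proof (rule Inf_greatest)
    fix n assume "n \<in> {enat (card Y) |Y. finite Y \<and> top_generates G T Y}"
    then obtain Y where Y: "n = enat (card Y)" "finite Y" "top_generates G T Y" by blast
    have Yc: "Y \<subseteq> carrier G" "T closure_of (generate G Y) = carrier G"
      using Y(3) unfolding top_generates_def by auto
    define F where "F d g = (\<Sum>v\<in>V. d v * chi v g) mod p" for d g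
    have Fh: "cont_hom G T (Zp p) (discrete_topology (carrier (Zp p))) (F d)" for d
      unfolding F_def by (rule group.lincomb_cont_hom[OF gG tgG p0 finV chi(1)])
    define D where "D d = (\<lambda>y\<in>Y. F d y)" for d
    have Fe: "F d (iota u (a u)) = (d u * chi u (iota u (a u))) mod p" if u: "u \<in> V" for d u
    proof -
      have "(\<Sum>v\<in>V. d v * chi v (iota u (a u))) = d u * chi u (iota u (a u)) + (\<Sum>v\<in>V - {u}. d v * chi v (iota u (a u)))"
        using sum.remove[OF finV u] by blast
      also have "(\<Sum>v\<in>V - {u}. d v * chi v (iota u (a u))) = 0"
        using kill[OF _ u _ a(1)[OF u]] by (intro sum.neutral) auto
      finally show ?thesis unfolding F_def by simp
    qed
    have inj: "inj_on D (PiE V (\<lambda>_. {..<p}))"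
    proof (rule inj_onI)
      fix d d' assume d: "d \<in> PiE V (\<lambda>_. {..<p})" and d': "d' \<in> PiE V (\<lambda>_. {..<p})" and eq: "D d = D d'"
      have eqY: "F d y = F d' y" if "y \<in> Y" for y
        using fun_cong[OF eq, of y] that unfolding D_def by simp
      have eqG: "F d g = F d' g" if "g \<in> carrier G" for g
        by (rule group.eq_on_generated[OF gG tgG p0 Fh Fh Yc eqY that])
      show "d = d'"
      proof (rule PiE_ext[OF d d'])
        fix u assume u: "u \<in> V"
        define cu where "cu = chi u (iota u (a u))"
        have cu: "0 < cu" "cu < p"
          using a(2)[OF u] chi(1)[OF u] iota_c[OF _ a(1)[OF u]] assms(6) u
          unfolding cu_def cont_hom_def hom_def by auto
        have "(d u * cu) mod p = (d' u * cu) mod p"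
          using eqG[OF iota_c[OF _ a(1)[OF u]]] Fe[OF u] assms(6) u unfolding cu_def by auto
        then show "d u = d' u" using mod_cancel_prime[OF p _ _ cu] d d' u by auto
      qed
    qed
    have img: "D ` PiE V (\<lambda>_. {..<p}) \<subseteq> PiE Y (\<lambda>_. {..<p})"
      unfolding D_def F_def using p0 by auto
    have "card (PiE V (\<lambda>_. {..<p})) \<le> card (PiE Y (\<lambda>_. {..<p}))"
      using card_inj_on_le[OF inj img] Y(2) by (simp add: finite_PiE)
    then have "p ^ card V \<le> p ^ card Y" using finV Y(2) by (simp add: card_PiE)
    then have "card V \<le> card Y" using power_le_imp_le_exp p prime_gt_1_nat by blast
    then show "enat (card V) \<le> n" using Y(1) by simp
  qed
  show ?thesis using part1 part2 by blast
qed

end
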